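(* If a billiard-like interval exchange transformation $f$ of $I=[-1,1)$ satisfies the modified Keane condition, then $f$ has no periodic points.
   Context: An interval exchange transformation of $I=[-1,1)$: a finite partition $\{I_\alpha\}_{\alpha\in\mathcal{A}}$ of $I$ into intervals closed on the left and open on the right ($|\mathcal{A}|\ge2$), and a bijection $f:I\to I$ whose restriction to each $I_\alpha$ is a translation. Let $p_\alpha$ be the left endpoint of $I_\alpha$. $f$ is billiard-like if: each $I_\alpha$ is contained in $[-1,0)$ or in $[0,1)$; each $f(I_\alpha)$ is contained in $[-1,0)$ or in $[0,1)$; and each of $[-1,0)$, $[0,1)$ contains at least two intervals of the partition. A billiard-like $f$ satisfies the modified Keane condition if $f^m(p_\alpha)\ne p_\beta$ for all $m\ge1$, all $\alpha\in\mathcal{A}$, and all $\beta\in\mathcal{A}$ with $p_\beta\notin\{-1,0\}$. *)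

theory Defs
  imports Complex_Main
begin

definition IET :: "'a set \<Rightarrow> ('a \<Rightarrow> real) \<Rightarrow> ('a \<Rightarrow> real) \<Rightarrow> (real \<Rightarrow> real) \<Rightarrow> bool" where
  "IET A p q f \<longleftrightarrow>
     finite A \<and> card A \<ge> 2 \<and>
     (\<forall>\<alpha>\<in>A. p \<alpha> < q \<alpha>) \<and>
     (\<forall>\<alpha>\<in>A. \<forall>\<beta>\<in>A. \<alpha> \<noteq> \<beta> \<longrightarrow> {p \<alpha>..<q \<alpha>} \<inter> {p \<beta>..<q \<beta>} = {}) \<and>
     (\<Union>\<alpha>\<in>A. {p \<alpha>..<q \<alpha>}) = {-1..<1} \<and>
     bij_betw f {-1..<1} {-1..<1} \<and>
     (\<forall>\<alpha>\<in>A. \<exists>t. \<forall>x\<in>{p \<alpha>..<q \<alpha>}. f x = x + t)"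

definition billiard_like :: "'a set \<Rightarrow> ('a \<Rightarrow> real) \<Rightarrow> ('a \<Rightarrow> real) \<Rightarrow> (real \<Rightarrow> real) \<Rightarrow> bool" where
  "billiard_like A p q f \<longleftrightarrow>
     IET A p q f \<and>
     (\<forall>\<alpha>\<in>A. {p \<alpha>..<q \<alpha>} \<subseteq> {-1..<0} \<or> {p \<alpha>..<q \<alpha>} \<subseteq> {0..<1}) \<and>
     (\<forall>\<alpha>\<in>A. f ` {p \<alpha>..<q \<alpha>} \<subseteq> {-1..<0} \<or> f ` {p \<alpha>..<q \<alpha>} \<subseteq> {0..<1}) \<and>
     card {\<alpha>\<in>A. {p \<alpha>..<q \<alpha>} \<subseteq> {-1..<0}} \<ge> 2 \<and>
     card {\<alpha>\<in>A. {p \<alpha>..<q \<alpha>} \<subseteq> {0..<1}} \<ge> 2"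

definition modified_keane :: "'a set \<Rightarrow> ('a \<Rightarrow> real) \<Rightarrow> (real \<Rightarrow> real) \<Rightarrow> bool" where
  "modified_keane A p f \<longleftrightarrow>
     (\<forall>m::nat. \<forall>\<alpha>\<in>A. \<forall>\<beta>\<in>A. m \<ge> 1 \<longrightarrow> p \<beta> \<notin> {-1, 0} \<longrightarrow> (f ^^ m) (p \<alpha>) \<noteq> p \<beta>)"

definition periodic_point :: "(real \<Rightarrow> real) \<Rightarrow> real \<Rightarrow> bool" where
  "periodic_point f x \<longleftrightarrow> x \<in> {-1..<1} \<and> (\<exists>n::nat. n \<ge> 1 \<and> (f ^^ n) x = x)"

end

theory Submission
  imports Defs
begin

lemma funpow_comm: "(f ^^ a) ((f ^^ b) x) = (f ^^ b) ((f ^^ a) x)"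
  by (metis add.commute comp_apply funpow_add)

locale BL =
  fixes A :: "'a set" and p q :: "'a \<Rightarrow> real" and f :: "real \<Rightarrow> real"
  assumes bl: "billiard_like A p q f" and mk: "modified_keane A p f"
begin

lemma iet: "IET A p q f" using bl unfolding billiard_like_def by (elim conjE) assumption

lemma pq_all: "\<forall>\<alpha>\<in>A. p \<alpha> < q \<alpha>" using iet unfolding IET_def by (elim conjE) assumption
lemma disj_all: "\<forall>\<alpha>\<in>A. \<forall>\<beta>\<in>A. \<alpha> \<noteq> \<beta> \<longrightarrow> {p \<alpha>..<q \<alpha>} \<inter> {p \<beta>..<q \<beta>} = {}"
  using iet unfolding IET_def by (elim conjE) assumption
lemma un: "(\<Union>\<alpha>\<in>A. {p \<alpha>..<q \<alpha>}) = {-1..<1}" using iet unfolding IET_def by (elim conjE) assumption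
lemma bij: "bij_betw f {-1..<1} {-1..<1}" using iet unfolding IET_def by (elim conjE) assumption
lemma tr_all: "\<forall>\<alpha>\<in>A. \<exists>t. \<forall>x\<in>{p \<alpha>..<q \<alpha>}. f x = x + t" using iet unfolding IET_def by (elim conjE) assumption
lemma half_all: "\<forall>\<alpha>\<in>A. {p \<alpha>..<q \<alpha>} \<subseteq> {-1..<0} \<or> {p \<alpha>..<q \<alpha>} \<subseteq> {0..<1}"
  using bl unfolding billiard_like_def by (elim conjE) assumption
lemma himg_all: "\<forall>\<alpha>\<in>A. f ` {p \<alpha>..<q \<alpha>} \<subseteq> {-1..<0} \<or> f ` {p \<alpha>..<q \<alpha>} \<subseteq> {0..<1}"
  using bl unfolding billiard_like_def by (elim conjE) assumption
lemma c1: "card {\<alpha>\<in>A. {p \<alpha>..<q \<alpha>} \<subseteq> {-1..<0}} \<ge> 2"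
  using bl unfolding billiard_like_def by (elim conjE) assumption
lemma c2: "card {\<alpha>\<in>A. {p \<alpha>..<q \<alpha>} \<subseteq> {0..<1}} \<ge> 2"
  using bl unfolding billiard_like_def by (elim conjE) assumption

lemma pq: "\<alpha> \<in> A \<Longrightarrow> p \<alpha> < q \<alpha>" using pq_all by blast
lemma disj: "\<alpha> \<in> A \<Longrightarrow> \<beta> \<in> A \<Longrightarrow> \<alpha> \<noteq> \<beta> \<Longrightarrow> {p \<alpha>..<q \<alpha>} \<inter> {p \<beta>..<q \<beta>} = {}"
  using disj_all by blast
lemma tr0: "\<alpha> \<in> A \<Longrightarrow> \<exists>t. \<forall>x\<in>{p \<alpha>..<q \<alpha>}. f x = x + t" using tr_all by blast
lemma half: "\<alpha> \<in> A \<Longrightarrow> {p \<alpha>..<q \<alpha>} \<subseteq> {-1..<0} \<or> {p \<alpha>..<q \<alpha>} \<subseteq> {0..<1}"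
  using half_all by blast
lemma himg: "\<alpha> \<in> A \<Longrightarrow> f ` {p \<alpha>..<q \<alpha>} \<subseteq> {-1..<0} \<or> f ` {p \<alpha>..<q \<alpha>} \<subseteq> {0..<1}"
  using himg_all by blast

lemma keane: "m \<ge> 1 \<Longrightarrow> \<alpha> \<in> A \<Longrightarrow> \<beta> \<in> A \<Longrightarrow> p \<beta> \<notin> {-1, 0} \<Longrightarrow> (f ^^ m) (p \<alpha>) \<noteq> p \<beta>"
  using mk unfolding modified_keane_def by blast

lemma tr: assumes "\<alpha> \<in> A" "p \<alpha> \<le> x" "x < q \<alpha>" shows "f x = x + (f (p \<alpha>) - p \<alpha>)"
proof -
  obtain t where t: "\<forall>x\<in>{p \<alpha>..<q \<alpha>}. f x = x + t" using tr0 assms(1) by blast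
  have "f (p \<alpha>) = p \<alpha> + t" using t pq[OF assms(1)] by auto
  then show ?thesis using t assms by auto
qed

lemma sub: "\<alpha> \<in> A \<Longrightarrow> {p \<alpha>..<q \<alpha>} \<subseteq> {-1..<1}"
  using un by blast

lemma pbnd: assumes "\<alpha> \<in> A" shows "-1 \<le> p \<alpha>" "p \<alpha> < 1" "q \<alpha> \<le> 1"
  using sub[OF assms] pq[OF assms] by auto

lemma cover: assumes "x \<in> {-1..<1}" shows "\<exists>\<alpha>\<in>A. p \<alpha> \<le> x \<and> x < q \<alpha>"
proof -
  have "x \<in> (\<Union>\<alpha>\<in>A. {p \<alpha>..<q \<alpha>})" using un assms by simp
  then show ?thesis by auto
qed

lemma uniq: assumes "\<alpha> \<in> A" "\<beta> \<in> A" "p \<alpha> \<le> x" "x < q \<alpha>" "p \<beta> \<le> x" "x < q \<beta>"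
  shows "\<alpha> = \<beta>"
  using disj[OF assms(1,2)] assms(3-) by auto

lemma frange: "x \<in> {-1..<1} \<Longrightarrow> f x \<in> {-1..<1}"
  using bij bij_betwE by blast

lemma finj: "x \<in> {-1..<1} \<Longrightarrow> y \<in> {-1..<1} \<Longrightarrow> f x = f y \<Longrightarrow> x = y"
  using bij unfolding bij_betw_def inj_on_def by blast

lemma fsurj: assumes "y \<in> {-1..<1}" shows "\<exists>w\<in>{-1..<1}. f w = y"
proof -
  have "y \<in> f ` {-1..<1}" using bij assms unfolding bij_betw_def by simp
  then show ?thesis by blast
qed

lemma fprange: "x \<in> {-1..<1} \<Longrightarrow> (f ^^ k) x \<in> {-1..<1}"
proof (induction k)
  case (Suc k) then show ?case using frange by (metis comp_apply funpow.simps(2))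
qed simp

lemma left_m1: "\<exists>\<alpha>\<in>A. p \<alpha> = -1"
proof -
  obtain \<alpha> where "\<alpha> \<in> A" "p \<alpha> \<le> -1" "-1 < q \<alpha>" using cover[of "-1"] by auto
  then show ?thesis using pbnd by force
qed

lemma left_0: "\<exists>\<alpha>\<in>A. p \<alpha> = 0"
proof -
  obtain \<alpha> where a: "\<alpha> \<in> A" "p \<alpha> \<le> 0" "0 < q \<alpha>" using cover[of "0"] by auto
  then have "0 \<in> {p \<alpha>..<q \<alpha>}" by auto
  then have "{p \<alpha>..<q \<alpha>} \<subseteq> {0..<1}" using half[OF a(1)] by auto
  then have "p \<alpha> \<ge> 0" using pq[OF a(1)] by auto
  then show ?thesis using a by force
qed

lemma preimg_end: assumes "w \<in> {-1..<1}" "f w \<in> {-1, 0}" shows "\<exists>\<gamma>\<in>A. w = p \<gamma>"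
proof -
  obtain \<gamma> where g: "\<gamma> \<in> A" "p \<gamma> \<le> w" "w < q \<gamma>" using cover assms(1) by blast
  show ?thesis
  proof (rule ccontr)
    assume "\<not> ?thesis"
    then have lt: "p \<gamma> < w" using g by force
    define u where "u = (p \<gamma> + w) / 2"
    have u: "p \<gamma> \<le> u" "u < q \<gamma>" "u < w" using lt g unfolding u_def by auto
    have fu: "f u < f w" using tr[OF g(1) u(1,2)] tr[OF g] u(3) by simp
    have "u \<in> {-1..<1}" using u pbnd[OF g(1)] by auto
    then have fur: "f u \<ge> -1" using frange by auto
    have im: "f w \<in> f ` {p \<gamma>..<q \<gamma>}" "f u \<in> f ` {p \<gamma>..<q \<gamma>}" using g u by auto
    show False
    proof (cases "f w = -1")
      case True then show ?thesis using fu fur by simp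
    next
      case False
      then have "f w = 0" using assms(2) by simp
      then have "f ` {p \<gamma>..<q \<gamma>} \<subseteq> {0..<1}" using himg[OF g(1)] im by auto
      then show False using im fu \<open>f w = 0\<close> by auto
    qed
  qed
qed

lemma Q: assumes a: "\<alpha> \<in> A" "p \<alpha> \<in> {-1, 0}"
  shows "\<exists>\<beta>\<in>A. p \<beta> = q \<alpha> \<and> p \<beta> \<notin> {-1, 0}"
proof -
  define H where "H = {p \<alpha>..<p \<alpha> + 1}"
  have HH: "H = {-1..<0} \<or> H = {0..<1}" using a(2) unfolding H_def by auto
  have cH: "card {\<beta>\<in>A. {p \<beta>..<q \<beta>} \<subseteq> H} \<ge> 2" using HH c1 c2 by auto
  have pa: "p \<alpha> \<in> {p \<alpha>..<q \<alpha>}" using pq[OF a(1)] by simp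
  have sH: "{p \<alpha>..<q \<alpha>} \<subseteq> H"
    using half[OF a(1)] pa a(2) unfolding H_def by auto
  then have qle: "q \<alpha> \<le> p \<alpha> + 1" using pq[OF a(1)] unfolding H_def by auto
  have qlt: "q \<alpha> < p \<alpha> + 1"
  proof (rule ccontr)
    assume "\<not> ?thesis"
    then have eq: "{p \<alpha>..<q \<alpha>} = H" using qle unfolding H_def by auto
    have "{\<beta>\<in>A. {p \<beta>..<q \<beta>} \<subseteq> H} \<subseteq> {\<alpha>}"
    proof
      fix \<beta> assume b: "\<beta> \<in> {\<beta>\<in>A. {p \<beta>..<q \<beta>} \<subseteq> H}"
      then have "p \<beta> \<in> {p \<alpha>..<q \<alpha>}" using eq pq[of \<beta>] by auto
      then have "\<beta> = \<alpha>" using uniq[of \<alpha> \<beta> "p \<beta>"] b a(1) pq[of \<beta>] by auto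
      then show "\<beta> \<in> {\<alpha>}" by simp
    qed
    then have "card {\<beta>\<in>A. {p \<beta>..<q \<beta>} \<subseteq> H} \<le> card {\<alpha>}"
      by (intro card_mono) simp_all
    then have "card {\<beta>\<in>A. {p \<beta>..<q \<beta>} \<subseteq> H} \<le> 1" by simp
    then show False using cH by simp
  qed
  have qin: "q \<alpha> \<in> {-1..<1}" using qlt pq[OF a(1)] a(2) by auto
  obtain \<beta> where b: "\<beta> \<in> A" "p \<beta> \<le> q \<alpha>" "q \<alpha> < q \<beta>" using cover[OF qin] by blast
  have "p \<beta> = q \<alpha>"
  proof (rule ccontr)
    assume "p \<beta> \<noteq> q \<alpha>"
    then have lt: "p \<beta> < q \<alpha>" using b by simp
    define u where "u = max (p \<alpha>) (p \<beta>)"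
    have "\<alpha> = \<beta>"
      using uniq[OF a(1) b(1), of u] lt b pq[OF a(1)] unfolding u_def by auto
    then show False using b by simp
  qed
  moreover have "p \<beta> \<notin> {-1, 0}" using calculation qlt pq[OF a(1)] a(2) by auto
  ultimately show ?thesis using b(1) by blast
qed

lemma Pre: assumes a: "\<alpha> \<in> A" and y: "y = q \<alpha> + (f (p \<alpha>) - p \<alpha>)" "y \<in> {-1..<1}"
  shows "\<exists>\<gamma>\<in>A. f (p \<gamma>) = y"
proof -
  obtain w where w: "w \<in> {-1..<1}" "f w = y" using fsurj[OF y(2)] by blast
  obtain \<gamma> where g: "\<gamma> \<in> A" "p \<gamma> \<le> w" "w < q \<gamma>" using cover w(1) by blast
  show ?thesis
  proof (cases "w = p \<gamma>")
    case True then show ?thesis using g w by blast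
  next
    case False
    then have lt: "p \<gamma> < w" using g by simp
    define \<epsilon> where "\<epsilon> = min (w - p \<gamma>) (q \<alpha> - p \<alpha>) / 2"
    have e: "\<epsilon> > 0" "\<epsilon> < w - p \<gamma>" "\<epsilon> < q \<alpha> - p \<alpha>" using lt pq[OF a] unfolding \<epsilon>_def by auto
    define u where "u = w - \<epsilon>"
    have u: "p \<gamma> \<le> u" "u < q \<gamma>" using e g unfolding u_def by auto
    have fu: "f u = y - \<epsilon>" using tr[OF g(1) u] tr[OF g] w unfolding u_def by simp
    define v where "v = q \<alpha> - \<epsilon>"
    have v: "p \<alpha> \<le> v" "v < q \<alpha>" using e unfolding v_def by auto
    have fv: "f v = y - \<epsilon>" using tr[OF a v] y(1) unfolding v_def by simp
    have "u = v" using finj[of u v] fu fv u v pbnd[OF a] pbnd[OF g(1)] by auto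
    then have "\<gamma> = \<alpha>" using uniq[OF a g(1), of u] u v by auto
    then have "f w = w + (f (p \<alpha>) - p \<alpha>)" using tr[OF g] by simp
    then have "w = q \<alpha>" using w y by simp
    then show ?thesis using g \<open>\<gamma> = \<alpha>\<close> by simp
  qed
qed

lemma Fixed: assumes a: "\<alpha> \<in> A" "p \<alpha> \<in> {-1, 0}" "f (p \<alpha>) = p \<alpha>" shows False
proof -
  obtain \<beta> where b: "\<beta> \<in> A" "p \<beta> = q \<alpha>" "p \<beta> \<notin> {-1, 0}" using Q[OF a(1,2)] by blast
  have "q \<alpha> \<in> {-1..<1}" using b pbnd[OF b(1)] by auto
  then obtain \<gamma> where g: "\<gamma> \<in> A" "f (p \<gamma>) = q \<alpha>" using Pre[OF a(1), of "q \<alpha>"] a(3) by auto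
  have "(f ^^ 1) (p \<gamma>) \<noteq> p \<beta>" using keane[of 1 \<gamma> \<beta>] g b by simp
  then show False using g b by simp
qed

lemma Swap: assumes a: "\<alpha> \<in> A" "p \<alpha> \<in> {-1, 0}" and b: "\<beta> \<in> A" "p \<beta> \<in> {-1, 0}"
  and f1: "f (p \<alpha>) = p \<beta>" and f2: "f (p \<beta>) = p \<alpha>" and len: "q \<alpha> - p \<alpha> \<le> q \<beta> - p \<beta>"
  shows False
proof -
  obtain \<gamma> where g: "\<gamma> \<in> A" "p \<gamma> = q \<alpha>" "p \<gamma> \<notin> {-1, 0}" using Q[OF a] by blast
  obtain \<beta>' where b': "\<beta>' \<in> A" "p \<beta>' = q \<beta>" "p \<beta>' \<notin> {-1, 0}" using Q[OF b] by blast
  define c where "c = q \<alpha> + (f (p \<alpha>) - p \<alpha>)"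
  have c: "c = q \<alpha> - p \<alpha> + p \<beta>" unfolding c_def using f1 by simp
  have cle: "c \<le> q \<beta>" using c len by simp
  have cgt: "c > p \<beta>" using c pq[OF a(1)] by simp
  have qb: "q \<beta> < 1" using b' pbnd[OF b'(1)] by simp
  show False
  proof (cases "c < q \<beta>")
    case True
    have cin: "c \<in> {-1..<1}" using True cgt pbnd[OF b(1)] qb by auto
    obtain \<delta> where d: "\<delta> \<in> A" "f (p \<delta>) = c" using Pre[OF a(1) c_def cin] by blast
    have "f c = c + (f (p \<beta>) - p \<beta>)" using tr[OF b(1), of c] True cgt by simp
    then have "f c = q \<alpha>" using c f2 by simp
    then have "(f ^^ 2) (p \<delta>) = p \<gamma>" using d g by (simp add: numeral_2_eq_2)
    then show False using keane[of 2 \<delta> \<gamma>] d g by simp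
  next
    case False
    then have ceq: "c = q \<beta>" using cle by simp
    have y: "q \<alpha> = q \<beta> + (f (p \<beta>) - p \<beta>)" using ceq c f2 by simp
    have "q \<alpha> \<in> {-1..<1}" using g pbnd[OF g(1)] by auto
    then obtain \<delta> where d: "\<delta> \<in> A" "f (p \<delta>) = q \<alpha>" using Pre[OF b(1) y] by blast
    then show False using keane[of 1 \<delta> \<gamma>] g by simp
  qed
qed

lemma Shift: assumes x: "x \<in> {-1..<1}" and n: "n \<ge> 1" and per: "(f ^^ n) x = x"
  shows "\<exists>\<beta>\<in>A. (f ^^ n) (p \<beta>) = p \<beta>"
proof -
  define idx where "idx y = (SOME \<alpha>. \<alpha> \<in> A \<and> p \<alpha> \<le> y \<and> y < q \<alpha>)" for y
  have idx: "idx y \<in> A \<and> p (idx y) \<le> y \<and> y < q (idx y)" if "y \<in> {-1..<1}" for y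
  proof -
    have "\<exists>\<alpha>. \<alpha> \<in> A \<and> p \<alpha> \<le> y \<and> y < q \<alpha>" using cover[OF that] by blast
    from someI_ex[OF this] show ?thesis unfolding idx_def .
  qed
  define orb where "orb k = (f ^^ k) x" for k
  have orb: "orb k \<in> {-1..<1}" for k unfolding orb_def using fprange[OF x] .
  define D where "D = (\<lambda>k. orb k - p (idx (orb k))) ` {..<n}"
  have Dfin: "finite D" "D \<noteq> {}" unfolding D_def using n by (auto simp: lessThan_empty_iff)
  define d where "d = Min D"
  have dle: "d \<le> orb k - p (idx (orb k))" if "k < n" for k
    unfolding d_def D_def using Dfin that by (simp add: D_def)
  have dge: "d \<ge> 0" using Min_in[OF Dfin] idx[OF orb] unfolding d_def D_def by force
  have it: "(f ^^ k) (x - d) = orb k - d" if "k \<le> n" for k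
    using that
  proof (induction k)
    case 0 then show ?case unfolding orb_def by simp
  next
    case (Suc k)
    then have k: "k < n" by simp
    have i: "idx (orb k) \<in> A" "p (idx (orb k)) \<le> orb k" "orb k < q (idx (orb k))" using idx[OF orb] by auto
    have m: "p (idx (orb k)) \<le> orb k - d" "orb k - d < q (idx (orb k))" using dle[OF k] dge i by auto
    have "(f ^^ Suc k) (x - d) = f (orb k - d)" using Suc by simp
    also have "\<dots> = orb k - d + (f (p (idx (orb k))) - p (idx (orb k)))" using tr[OF i(1) m] .
    also have "\<dots> = orb (Suc k) - d" using tr[OF i] unfolding orb_def by simp
    finally show ?case .
  qed
  obtain k0 where k0: "k0 < n" "d = orb k0 - p (idx (orb k0))"
    using Min_in[OF Dfin] unfolding d_def D_def by auto
  define \<beta> where "\<beta> = idx (orb k0)"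
  have pb: "p \<beta> = (f ^^ k0) (x - d)" using it[of k0] k0 unfolding \<beta>_def by simp
  have xn: "(f ^^ n) (x - d) = x - d" using it[of n] per unfolding orb_def by simp
  have "(f ^^ n) (p \<beta>) = p \<beta>" using pb xn funpow_comm[where f=f and a=n and b=k0 and x="x - d"] by simp
  then show ?thesis using idx[OF orb] unfolding \<beta>_def by blast
qed

lemma Chain: assumes b: "\<beta> \<in> A" and n: "n \<ge> 1" and per: "(f ^^ n) (p \<beta>) = p \<beta>"
  shows "p \<beta> \<in> {-1, 0}" "f (p \<beta>) \<in> {-1, 0}"
proof -
  show pb: "p \<beta> \<in> {-1, 0}" using keane[OF n b b] per by blast
  have pbr: "p \<beta> \<in> {-1..<1}" using pbnd[OF b] by simp
  have "j < n \<Longrightarrow> (f ^^ (n - j)) (p \<beta>) \<in> {-1, 0}" for j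
  proof (induction j)
    case 0 then show ?case using per pb by simp
  next
    case (Suc j)
    then have "(f ^^ (n - j)) (p \<beta>) \<in> {-1, 0}" by simp
    moreover have "n - j = Suc (n - Suc j)" using Suc by simp
    ultimately have "f ((f ^^ (n - Suc j)) (p \<beta>)) \<in> {-1, 0}" by simp
    then obtain \<gamma> where g: "\<gamma> \<in> A" "(f ^^ (n - Suc j)) (p \<beta>) = p \<gamma>"
      using preimg_end[OF fprange[OF pbr]] by metis
    have "(f ^^ n) (p \<gamma>) = p \<gamma>"
      using g(2) funpow_comm[where f=f and a=n and b="n - Suc j" and x="p \<beta>"] per by simp
    then have "p \<gamma> \<in> {-1, 0}" using keane[OF n g(1) g(1)] by blast
    then show ?case using g by simp
  qed
  from this[of "n - 1"] show "f (p \<beta>) \<in> {-1, 0}" using n by simp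
qed

lemma left_of: "z \<in> {-1, 0} \<Longrightarrow> \<exists>\<alpha>\<in>A. p \<alpha> = z"
  using left_m1 left_0 by auto

lemma no_periodic: "\<not> (\<exists>x. periodic_point f x)"
proof
  assume "\<exists>x. periodic_point f x"
  then obtain x n where x: "x \<in> {-1..<1}" "n \<ge> 1" "(f ^^ n) x = x"
    unfolding periodic_point_def by blast
  obtain \<beta> where b: "\<beta> \<in> A" "(f ^^ n) (p \<beta>) = p \<beta>" using Shift[OF x] by blast
  note c = Chain[OF b(1) x(2) b(2)]
  obtain \<beta>1 where b1: "\<beta>1 \<in> A" "p \<beta>1 = f (p \<beta>)" using left_of[OF c(2)] by blast
  have per1: "(f ^^ n) (p \<beta>1) = p \<beta>1"
  proof -
    have "(f ^^ n) (p \<beta>1) = (f ^^ n) (f (p \<beta>))" using b1(2) by simp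
    also have "\<dots> = f ((f ^^ n) (p \<beta>))" using funpow_swap1[of f n "p \<beta>"] by simp
    also have "\<dots> = p \<beta>1" using b(2) b1(2) by simp
    finally show ?thesis .
  qed
  note c1 = Chain[OF b1(1) x(2) per1]
  show False
  proof (cases "f (p \<beta>) = p \<beta>")
    case True then show ?thesis using Fixed[OF b(1) c(1) True] by simp
  next
    case F1: False
    show ?thesis
    proof (cases "f (p \<beta>1) = p \<beta>1")
      case True then show ?thesis using Fixed[OF b1(1) c1(1) True] by simp
    next
      case False
      have f2: "f (p \<beta>1) = p \<beta>"
      proof -
        have "p \<beta>1 \<noteq> p \<beta>" using F1 b1(2) by simp
        moreover have "f (p \<beta>1) \<noteq> p \<beta>1" using False .
        ultimately show ?thesis using c(1) c1(1) c1(2) by auto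
      qed
      show ?thesis
      proof (cases "q \<beta> - p \<beta> \<le> q \<beta>1 - p \<beta>1")
        case True then show ?thesis using Swap[OF b(1) c(1) b1(1) c1(1) b1(2)[symmetric] f2] by blast
      next
        case False then show ?thesis using Swap[OF b1(1) c1(1) b(1) c(1) f2 b1(2)[symmetric]] by linarith
      qed
    qed
  qed
qed

end

theorem lemma8p3:
  fixes A :: "'a set" and p q :: "'a \<Rightarrow> real" and f :: "real \<Rightarrow> real"
  assumes "billiard_like A p q f"
    and "modified_keane A p f"
  shows "\<not> (\<exists>x. periodic_point f x)"
proof -
  interpret BL A p q f by (rule BL.intro) (fact assms(1), fact assms(2))
  show ?thesis by (rule no_periodic)
qed

end
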